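(* For any fitness graph $\mathcal{G}$ and any seed set $S\subseteq V$, the Heterogeneous Moran process and the Loopy process started from $S$ have the same fixation probability.
   Context: A fitness graph is $\mathcal{G}=(G,(m,r))$ where $G=(V,E,w)$ is a strongly connected directed graph, $w(u,\cdot)$ is a probability distribution over out-neighbours of $u$, and $r,m\colon V\to(0,\infty)$. Without loss of generality every node has a self-loop $(u,u)\in E$ (with $w(u,u)=0$ if it was absent). For a configuration $X\subseteq V$ (set of mutants), $f_X(u)=m(u)$ if $u\in X$, else $r(u)$. Heterogeneous Moran process: from $X$, pick $u$ with probability $f_X(u)/\sum_v f_X(v)$, then $v$ with probability $w(u,v)$, and $v$ takes the type of $u$. Loopy process: let $f_{\max}=\max_{u\in V}\max\{r(u),m(u)\}$; from $X$, pick $u$ uniformly with probability $1/|V|$, then pick $v$ with probability $w_X(u,v)$, where $w_X(u,v)=\frac{f_X(u)}{f_{\max}}w(u,v)$ for $v\ne u$ and $w_X(u,u)=1-\frac{f_X(u)}{f_{\max}}(1-w(u,u))$, and $v$ takes the type of $u$. Both start at $S$; the fixation probability is the probability of eventually reaching configuration $V$. *)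

theory Defs
  imports Complex_Main
begin

text \<open>Vertices are the elements of a finite type 'v (so V = UNIV).
  The graph is given by an edge relation E and weights w.\<close>

definition fitness_graph ::
  "('v::finite \<times> 'v) set \<Rightarrow> ('v \<Rightarrow> 'v \<Rightarrow> real) \<Rightarrow> ('v \<Rightarrow> real) \<Rightarrow> ('v \<Rightarrow> real) \<Rightarrow> bool" where
  "fitness_graph E w r m \<longleftrightarrow>
     (\<forall>u v. (u, v) \<in> E\<^sup>*) \<and>
     (\<forall>u. (u, u) \<in> E) \<and>
     (\<forall>u v. w u v \<ge> 0) \<and>
     (\<forall>u v. w u v \<noteq> 0 \<longrightarrow> (u, v) \<in> E) \<and>
     (\<forall>u v. (u, v) \<in> E \<and> u \<noteq> v \<longrightarrow> w u v > 0) \<and>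
     (\<forall>u. (\<Sum>v\<in>UNIV. w u v) = 1) \<and>
     (\<forall>u. r u > 0 \<and> m u > 0)"

definition fit :: "('v \<Rightarrow> real) \<Rightarrow> ('v \<Rightarrow> real) \<Rightarrow> 'v set \<Rightarrow> 'v \<Rightarrow> real" where
  "fit r m X u = (if u \<in> X then m u else r u)"

text \<open>Effect of "u reproduces onto v": v takes the type of u.\<close>
definition upd :: "'v set \<Rightarrow> 'v \<Rightarrow> 'v \<Rightarrow> 'v set" where
  "upd X u v = (if u \<in> X then insert v X else X - {v})"

definition moran_step :: "('v::finite \<Rightarrow> 'v \<Rightarrow> real) \<Rightarrow> ('v \<Rightarrow> real) \<Rightarrow> ('v \<Rightarrow> real)
    \<Rightarrow> 'v set \<Rightarrow> 'v \<Rightarrow> 'v \<Rightarrow> real" where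
  "moran_step w r m X u v = fit r m X u / (\<Sum>x\<in>UNIV. fit r m X x) * w u v"

definition fmax :: "('v::finite \<Rightarrow> real) \<Rightarrow> ('v \<Rightarrow> real) \<Rightarrow> real" where
  "fmax r m = Max (range (\<lambda>u. max (r u) (m u)))"

definition loopy_w :: "('v::finite \<Rightarrow> 'v \<Rightarrow> real) \<Rightarrow> ('v \<Rightarrow> real) \<Rightarrow> ('v \<Rightarrow> real)
    \<Rightarrow> 'v set \<Rightarrow> 'v \<Rightarrow> 'v \<Rightarrow> real" where
  "loopy_w w r m X u v =
     (if v \<noteq> u then fit r m X u / fmax r m * w u v
      else 1 - fit r m X u / fmax r m * (1 - w u u))"

definition loopy_step :: "('v::finite \<Rightarrow> 'v \<Rightarrow> real) \<Rightarrow> ('v \<Rightarrow> real) \<Rightarrow> ('v \<Rightarrow> real)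
    \<Rightarrow> 'v set \<Rightarrow> 'v \<Rightarrow> 'v \<Rightarrow> real" where
  "loopy_step w r m X u v = 1 / real (card (UNIV :: 'v set)) * loopy_w w r m X u v"

text \<open>Probability that the chain with step probabilities P (over pairs (u,v)),
  started at X, is in the absorbing configuration V = UNIV after n steps,
  i.e. has reached V within n steps.\<close>
fun hit :: "('v::finite set \<Rightarrow> 'v \<Rightarrow> 'v \<Rightarrow> real) \<Rightarrow> nat \<Rightarrow> 'v set \<Rightarrow> real" where
  "hit P 0 X = (if X = UNIV then 1 else 0)"
| "hit P (Suc n) X = (if X = UNIV then 1
      else (\<Sum>u\<in>UNIV. \<Sum>v\<in>UNIV. P X u v * hit P n (upd X u v)))"

definition fixation_prob :: "('v::finite set \<Rightarrow> 'v \<Rightarrow> 'v \<Rightarrow> real) \<Rightarrow> 'v set \<Rightarrow> real" where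
  "fixation_prob P S = (SUP n. hit P n S)"

end

theory Submission
  imports Defs
begin

definition TT :: "('v::finite set \<Rightarrow> 'v \<Rightarrow> 'v \<Rightarrow> real) \<Rightarrow> ('v set \<Rightarrow> real) \<Rightarrow> 'v set \<Rightarrow> real" where
  "TT P h X = (if X = UNIV then 1 else (\<Sum>u\<in>UNIV. \<Sum>v\<in>UNIV. P X u v * h (upd X u v)))"

lemma hit_Suc_TT: "hit P (Suc n) X = TT P (hit P n) X"
  by (simp add: TT_def)

lemma TT_mono:
  assumes "\<forall>X u v. P X u v \<ge> 0" and "\<And>Y. g Y \<le> h Y"
  shows "TT P g X \<le> TT P h X"
  unfolding TT_def using assms
  by (auto intro!: sum_mono mult_left_mono)

lemma hit_nonneg:
  assumes "\<forall>X u v. P X u v \<ge> 0"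
  shows "hit P n X \<ge> 0"
  using assms by (induction n arbitrary: X) (auto intro!: sum_nonneg)

lemma hit_le:
  assumes nn: "\<forall>X u v. P X u v \<ge> 0" and h0: "\<And>X. h X \<ge> 0" and hT: "\<And>X. TT P h X \<le> h X"
  shows "hit P n X \<le> h X"
proof (induction n arbitrary: X)
  case 0
  have "1 \<le> h UNIV" using hT[of UNIV] by (simp add: TT_def)
  then show ?case using h0[of X] by simp
next
  case (Suc n)
  have "hit P (Suc n) X = TT P (hit P n) X" by (rule hit_Suc_TT)
  also have "\<dots> \<le> TT P h X" by (rule TT_mono[OF nn Suc])
  also have "\<dots> \<le> h X" by (rule hT)
  finally show ?case .
qed

lemma hit_mono_Suc:
  assumes nn: "\<forall>X u v. P X u v \<ge> 0"
  shows "hit P n X \<le> hit P (Suc n) X"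
proof (induction n arbitrary: X)
  case 0
  show ?case using hit_nonneg[OF nn, of "Suc 0" X] by (cases "X = UNIV") auto
next
  case (Suc n)
  have "hit P (Suc n) X = TT P (hit P n) X" by (rule hit_Suc_TT)
  also have "\<dots> \<le> TT P (hit P (Suc n)) X" by (rule TT_mono[OF nn Suc])
  also have "\<dots> = hit P (Suc (Suc n)) X" by (rule hit_Suc_TT[symmetric])
  finally show ?case .
qed

lemma hit_bdd:
  assumes nn: "\<forall>X u v. P X u v \<ge> 0" and s1: "\<And>X. (\<Sum>u\<in>UNIV. \<Sum>v\<in>UNIV. P X u v) \<le> 1"
  shows "hit P n X \<le> 1"
  using hit_le[OF nn, of "\<lambda>_. 1"] s1 by (simp add: TT_def)

lemma fix_le:
  assumes nn: "\<forall>X u v. P X u v \<ge> 0" and h0: "\<And>X. h X \<ge> 0" and hT: "\<And>X. TT P h X \<le> h X"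
  shows "fixation_prob P X \<le> h X"
  unfolding fixation_prob_def
  by (rule cSUP_least) (auto intro: hit_le[OF nn h0 hT])

lemma fix_nonneg:
  assumes nn: "\<forall>X u v. P X u v \<ge> 0" and s1: "\<And>X. (\<Sum>u\<in>UNIV. \<Sum>v\<in>UNIV. P X u v) \<le> 1"
  shows "fixation_prob P X \<ge> 0"
proof -
  have "bdd_above (range (\<lambda>n. hit P n X))" using hit_bdd[OF nn s1] by (intro bdd_aboveI[where M=1]) auto
  then have "hit P 0 X \<le> fixation_prob P X" unfolding fixation_prob_def by (rule cSUP_upper[OF UNIV_I])
  then show ?thesis using hit_nonneg[OF nn, of 0 X] by linarith
qed

lemma fix_lim:
  assumes nn: "\<forall>X u v. P X u v \<ge> 0" and s1: "\<And>X. (\<Sum>u\<in>UNIV. \<Sum>v\<in>UNIV. P X u v) \<le> 1"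
  shows "(\<lambda>n. hit P n X) \<longlonglongrightarrow> fixation_prob P X"
  unfolding fixation_prob_def
  by (rule LIMSEQ_incseq_SUP) (auto intro!: bdd_aboveI hit_bdd[OF nn s1] incseq_SucI hit_mono_Suc[OF nn])

lemma fix_fixed:
  assumes nn: "\<forall>X u v. P X u v \<ge> 0" and s1: "\<And>X. (\<Sum>u\<in>UNIV. \<Sum>v\<in>UNIV. P X u v) \<le> 1"
  shows "TT P (fixation_prob P) X = fixation_prob P X"
proof -
  have L: "\<And>Y. (\<lambda>n. hit P n Y) \<longlonglongrightarrow> fixation_prob P Y" by (rule fix_lim[OF nn s1])
  have "(\<lambda>n. TT P (hit P n) X) \<longlonglongrightarrow> TT P (fixation_prob P) X"
    unfolding TT_def by (auto intro!: tendsto_sum tendsto_mult_left L)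
  moreover have "(\<lambda>n. TT P (hit P n) X) \<longlonglongrightarrow> fixation_prob P X"
    using LIMSEQ_Suc[OF L[of X]] by (simp only: hit_Suc_TT)
  ultimately show ?thesis by (rule LIMSEQ_unique)
qed

lemma upd_same: "upd X u u = X"
  by (auto simp: upd_def)

lemma fmax_ge:
  fixes r m :: "'v::finite \<Rightarrow> real"
  shows "fit r m X u \<le> fmax r m"
proof -
  have "max (r u) (m u) \<le> fmax r m" unfolding fmax_def by (rule Max_ge) auto
  then show ?thesis by (auto simp: fit_def)
qed

lemma fit_pos: "\<forall>u. r u > 0 \<and> m u > 0 \<Longrightarrow> fit r m X u > 0"
  by (auto simp: fit_def)

lemma loopy_row:
  fixes w :: "'v::finite \<Rightarrow> 'v \<Rightarrow> real"
  shows "(\<Sum>v\<in>UNIV. loopy_w w r m X u v * h (upd X u v))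
     = h X + fit r m X u / fmax r m * ((\<Sum>v\<in>UNIV. w u v * h (upd X u v)) - h X)"
proof -
  define a where "a = fit r m X u / fmax r m"
  have "(\<Sum>v\<in>UNIV. loopy_w w r m X u v * h (upd X u v))
     = loopy_w w r m X u u * h X + (\<Sum>v\<in>UNIV-{u}. loopy_w w r m X u v * h (upd X u v))"
    by (subst sum.remove[of UNIV u]) (auto simp: upd_same)
  also have "(\<Sum>v\<in>UNIV-{u}. loopy_w w r m X u v * h (upd X u v)) = a * (\<Sum>v\<in>UNIV-{u}. w u v * h (upd X u v))"
    by (auto simp: sum_distrib_left loopy_w_def a_def intro!: sum.cong)
  also have "(\<Sum>v\<in>UNIV. w u v * h (upd X u v)) = w u u * h X + (\<Sum>v\<in>UNIV-{u}. w u v * h (upd X u v))"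
    by (subst sum.remove[of UNIV u]) (auto simp: upd_same)
  ultimately show ?thesis
    by (simp add: loopy_w_def a_def[symmetric] algebra_simps)
qed

definition SS :: "('v::finite set \<Rightarrow> 'v \<Rightarrow> 'v \<Rightarrow> real) \<Rightarrow> ('v set \<Rightarrow> real) \<Rightarrow> 'v set \<Rightarrow> real" where
  "SS P h X = (\<Sum>u\<in>UNIV. \<Sum>v\<in>UNIV. P X u v * h (upd X u v))"

lemma loopy_rel:
  fixes w :: "'v::finite \<Rightarrow> 'v \<Rightarrow> real"
  assumes pos: "\<forall>u. r u > 0 \<and> m u > 0"
  shows "SS (loopy_step w r m) h X = h X
     + (\<Sum>x\<in>UNIV. fit r m X x) / (real (card (UNIV::'v set)) * fmax r m)
       * (SS (moran_step w r m) h X - h X)"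
proof -
  define F where "F = (\<Sum>x\<in>UNIV. fit r m X x)"
  define n where "n = real (card (UNIV::'v set))"
  define A where "A u = (\<Sum>v\<in>UNIV. w u v * h (upd X u v))" for u
  have F0: "F > 0" unfolding F_def using fit_pos[OF pos]
    by (intro sum_pos) auto
  have n0: "n > 0" unfolding n_def by (simp add: finite_UNIV_card_ge_0)
  have fm: "fmax r m > 0" using fmax_ge[of r m X] fit_pos[OF pos, of X] by (meson less_le_trans)
  define c where "c = 1 / (n * fmax r m)"
  define B where "B = (\<Sum>u\<in>UNIV. fit r m X u * A u)"
  have L0: "SS (loopy_step w r m) h X = (\<Sum>u\<in>UNIV. 1 / n * (h X + fit r m X u / fmax r m * (A u - h X)))"
    unfolding SS_def loopy_step_def
  proof (intro sum.cong refl)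
    fix u
    have "(\<Sum>v\<in>UNIV. 1 / n * loopy_w w r m X u v * h (upd X u v))
        = 1 / n * (\<Sum>v\<in>UNIV. loopy_w w r m X u v * h (upd X u v))"
      by (simp add: sum_distrib_left mult.assoc)
    also have "\<dots> = 1 / n * (h X + fit r m X u / fmax r m * (A u - h X))"
      by (simp only: loopy_row A_def)
    finally show "(\<Sum>v\<in>UNIV. 1 / real (card (UNIV::'v set)) * loopy_w w r m X u v * h (upd X u v))
        = 1 / n * (h X + fit r m X u / fmax r m * (A u - h X))" by (simp add: n_def)
  qed
  also have "\<dots> = h X + c * B - c * F * h X"
  proof -
    have e: "\<And>u. 1 / n * (h X + fit r m X u / fmax r m * (A u - h X)) = 1 / n * h X + c * (fit r m X u * A u) - c * h X * fit r m X u"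
      using n0 fm by (simp add: c_def field_simps)
    have "(\<Sum>u\<in>UNIV. 1 / n * (h X + fit r m X u / fmax r m * (A u - h X)))
       = (\<Sum>u\<in>(UNIV::'v set). 1 / n * h X) + c * (\<Sum>u\<in>UNIV. fit r m X u * A u) - c * h X * F"
      by (simp only: e sum_subtractf sum.distrib sum_distrib_left[symmetric]) (simp add: F_def)
    also have "(\<Sum>u\<in>(UNIV::'v set). 1 / n * h X) = h X" using n0 by (simp add: n_def)
    finally show ?thesis by (simp add: B_def algebra_simps)
  qed
  finally have L: "SS (loopy_step w r m) h X = h X + c * B - c * F * h X" .
  have M: "SS (moran_step w r m) h X = 1 / F * B"
    unfolding SS_def moran_step_def A_def F_def B_def
    by (simp add: sum_distrib_left mult.assoc)
  have BM: "B = F * SS (moran_step w r m) h X" using M F0 by simp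
  have "F / (n * fmax r m) * (SS (moran_step w r m) h X - h X) = c * B - c * F * h X"
    unfolding BM c_def by (simp add: algebra_simps)
  then show ?thesis using L by (simp add: F_def n_def)
qed

lemma loopy_fixed_iff:
  fixes w :: "'v::finite \<Rightarrow> 'v \<Rightarrow> real"
  assumes pos: "\<forall>u. r u > 0 \<and> m u > 0"
  shows "SS (loopy_step w r m) h X = h X \<longleftrightarrow> SS (moran_step w r m) h X = h X"
proof -
  have F0: "(\<Sum>x\<in>UNIV. fit r m X x) > 0" using fit_pos[OF pos]
    by (intro sum_pos) auto
  have n0: "real (card (UNIV::'v set)) > 0" by (simp add: finite_UNIV_card_ge_0)
  have fm: "fmax r m > 0" using fmax_ge[of r m X] fit_pos[OF pos, of X] by (meson less_le_trans)
  have c0: "(\<Sum>x\<in>UNIV. fit r m X x) / (real (card (UNIV::'v set)) * fmax r m) \<noteq> 0"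
    using F0 n0 fm by simp
  show ?thesis using loopy_rel[OF pos, of w h X] c0 by auto
qed

lemma TT_SS: "TT P h X = (if X = UNIV then 1 else SS P h X)"
  by (simp add: TT_def SS_def)

lemma sum_SS: "(\<Sum>u\<in>UNIV. \<Sum>v\<in>UNIV. P X u v) = SS P (\<lambda>_. 1) X"
  by (simp add: SS_def)

theorem lemma5:
  fixes E :: "('v::finite \<times> 'v) set" and w :: "'v \<Rightarrow> 'v \<Rightarrow> real"
    and r m :: "'v \<Rightarrow> real" and S :: "'v set"
  assumes "fitness_graph E w r m"
  shows "fixation_prob (moran_step w r m) S = fixation_prob (loopy_step w r m) S"
proof -
  have pos: "\<forall>u. r u > 0 \<and> m u > 0" and w0: "\<And>u v. w u v \<ge> 0"
    and w1: "\<And>u. (\<Sum>v\<in>UNIV. w u v) = 1"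
    using assms by (auto simp: fitness_graph_def)
  let ?P = "moran_step w r m" and ?Q = "loopy_step w r m"
  have wle: "w u u \<le> 1" for u
    using member_le_sum[of u UNIV "w u"] w0 w1[of u] by simp
  have fm: "fmax r m > 0" using fmax_ge[of r m "{}"] fit_pos[OF pos, of "{}"] by (meson less_le_trans)
  have Pnn: "\<forall>X u v. ?P X u v \<ge> 0"
  proof (intro allI)
    fix X u v
    have "(\<Sum>x\<in>UNIV. fit r m X x) > 0" using fit_pos[OF pos] by (intro sum_pos) auto
    then show "?P X u v \<ge> 0" unfolding moran_step_def
      using fit_pos[OF pos, of X u] w0[of u v] by simp
  qed
  have Qnn: "\<forall>X u v. ?Q X u v \<ge> 0"
  proof (intro allI)
    fix X u v
    have a0: "fit r m X u / fmax r m \<ge> 0" using fit_pos[OF pos, of X u] fm by simp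
    have a1: "fit r m X u / fmax r m \<le> 1" using fmax_ge[of r m X u] fm by simp
    have "fit r m X u / fmax r m * (1 - w u u) \<le> 1 * 1"
      using a0 a1 wle[of u] w0[of u u] by (intro mult_mono) auto
    then have "loopy_w w r m X u v \<ge> 0"
      using a0 w0[of u v] fit_pos[OF pos, of X u] fm by (auto simp: loopy_w_def)
    then show "?Q X u v \<ge> 0" by (simp add: loopy_step_def)
  qed
  have Ps: "SS ?P (\<lambda>_. 1) X = 1" for X
  proof -
    have F0: "(\<Sum>x\<in>UNIV. fit r m X x) > 0" using fit_pos[OF pos]
      by (intro sum_pos) auto
    have "SS ?P (\<lambda>_. 1) X = (\<Sum>u\<in>UNIV. fit r m X u / (\<Sum>x\<in>UNIV. fit r m X x) * (\<Sum>v\<in>UNIV. w u v))"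
      by (simp add: SS_def moran_step_def sum_distrib_left)
    also have "\<dots> = (\<Sum>u\<in>UNIV. fit r m X u) / (\<Sum>x\<in>UNIV. fit r m X x)"
      by (simp only: w1 mult_1_right sum_divide_distrib)
    also have "\<dots> = 1" using F0 by simp
    finally show ?thesis .
  qed
  have Qs: "SS ?Q (\<lambda>_. 1) X = 1" for X
    using loopy_rel[OF pos, of w "\<lambda>_. 1" X] Ps[of X] by simp
  have Ps1: "\<And>X. (\<Sum>u\<in>UNIV. \<Sum>v\<in>UNIV. ?P X u v) \<le> 1" by (simp only: sum_SS Ps)
  have Qs1: "\<And>X. (\<Sum>u\<in>UNIV. \<Sum>v\<in>UNIV. ?Q X u v) \<le> 1" by (simp only: sum_SS Qs)
  define fP where "fP = fixation_prob ?P"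
  define fQ where "fQ = fixation_prob ?Q"
  have fPfix: "TT ?P fP X = fP X" for X unfolding fP_def by (rule fix_fixed[OF Pnn Ps1])
  have fQfix: "TT ?Q fQ X = fQ X" for X unfolding fQ_def by (rule fix_fixed[OF Qnn Qs1])
  have fP0: "fP X \<ge> 0" for X unfolding fP_def by (rule fix_nonneg[OF Pnn Ps1])
  have fQ0: "fQ X \<ge> 0" for X unfolding fQ_def by (rule fix_nonneg[OF Qnn Qs1])
  have "TT ?Q fP X = fP X" for X
  proof (cases "X = UNIV")
    case True
    then show ?thesis using fPfix[of X] by (simp add: TT_SS)
  next
    case False
    then show ?thesis using fPfix[of X] loopy_fixed_iff[OF pos, of w fP X] by (simp add: TT_SS)
  qed
  then have le1: "fQ S \<le> fP S" unfolding fQ_def by (intro fix_le[OF Qnn fP0]) auto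
  have "TT ?P fQ X = fQ X" for X
  proof (cases "X = UNIV")
    case True
    then show ?thesis using fQfix[of X] by (simp add: TT_SS)
  next
    case False
    then show ?thesis using fQfix[of X] loopy_fixed_iff[OF pos, of w fQ X] by (simp add: TT_SS)
  qed
  then have le2: "fP S \<le> fQ S" unfolding fP_def by (intro fix_le[OF Pnn fQ0]) auto
  show ?thesis using le1 le2 by (simp add: fP_def fQ_def)
qed

end
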